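(* Let $H$ be a tree and $Q$ a subtree of $H$ with at least one edge. Then $Q$ is a good subgraph of $H$ if and only if no vertex of $N_H[V_Q]$ is a leaf of $H$ and the subgraph of $H$ induced by $N_H[V_Q]$ is the corona of $Q$, that is, $N_H[V_Q]\cap L_H=\emptyset$ and $H[N_H[V_Q]]=Q\circ K_1$.
   Context: Graphs are finite. A leaf is a vertex of degree one; $L_H$ is the set of leaves of $H$; $N_H[X]$ is the closed neighborhood of a vertex set $X$. The corona $Q\circ K_1$ is obtained from $Q$ by attaching one pendant edge (to a new leaf) at each vertex of $Q$; the condition $H[N_H[V_Q]]=Q\circ K_1$ means that the subgraph induced by $N_H[V_Q]$ consists of $Q$ together with, for each vertex $v$ of $Q$, exactly one neighbor of $v$ outside $V_Q$, these neighbors being distinct and pairwise nonadjacent. Good subgraph: Let $Q$ be a subgraph of $H$ without isolated vertices, and $E_Q^-$ the set of edges of $H$ not in $Q$ incident with at least one vertex of $Q$. $Q$ is a good subgraph of $H$ if there exist a set of edges $E$ with $E_Q^-\subseteq E\subseteq E_H\setminus E_Q$ and an orientation $A_E$ of the edges of $E$ (where $d^+(x)$, $d^-(x)$ denote the numbers of arcs of $A_E$ leaving, resp. entering $x$, and $d_H(x)$ is the degree in $H$) such that the arcs of $A_E$ form a family $\mathcal P=\{P_x: x\in V_Q\}$ of oriented paths indexed by the vertices of $Q$ with: (i) every vertex $v$ of $Q$ is the initial vertex of exactly one path of $\mathcal P$, and $d^+(v)=1$, $d^-(v)=d_H(v)-d_Q(v)-1$; (ii) if $x$ is an inner vertex of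 a path of $\mathcal P$, then $d^+(x)=1$ and $d^-(x)=d_H(x)-1$; (iii) if $x$ is an end vertex of a path of $\mathcal P$, then $d^-(x)<d_H(x)$. *)

theory Defs
  imports Main
begin

definition graph :: "'a set \<Rightarrow> 'a set set \<Rightarrow> bool" where
  "graph V E \<longleftrightarrow> finite V \<and> (\<forall>e\<in>E. \<exists>u v. e = {u, v} \<and> u \<noteq> v \<and> u \<in> V \<and> v \<in> V)"

definition deg :: "'a set set \<Rightarrow> 'a \<Rightarrow> nat" where
  "deg E v = card {e \<in> E. v \<in> e}"

definition leaves :: "'a set \<Rightarrow> 'a set set \<Rightarrow> 'a set" where
  "leaves V E = {v \<in> V. deg E v = 1}"

definition closed_nbhd :: "'a set set \<Rightarrow> 'a set \<Rightarrow> 'a set" where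
  "closed_nbhd E X = X \<union> {v. \<exists>x\<in>X. {x, v} \<in> E}"

definition induced_edges :: "'a set set \<Rightarrow> 'a set \<Rightarrow> 'a set set" where
  "induced_edges E S = {e \<in> E. e \<subseteq> S}"

definition connected_graph :: "'a set \<Rightarrow> 'a set set \<Rightarrow> bool" where
  "connected_graph V E \<longleftrightarrow> V \<noteq> {} \<and>
     (\<forall>u\<in>V. \<forall>v\<in>V. (\<lambda>x y. {x, y} \<in> E)\<^sup>*\<^sup>* u v)"

definition has_cycle :: "'a set \<Rightarrow> 'a set set \<Rightarrow> bool" where
  "has_cycle V E \<longleftrightarrow> (\<exists>c. length c \<ge> 3 \<and> distinct c \<and> set c \<subseteq> V \<and>
     (\<forall>i < length c - 1. {c ! i, c ! (i + 1)} \<in> E) \<and> {last c, hd c} \<in> E)"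

definition tree :: "'a set \<Rightarrow> 'a set set \<Rightarrow> bool" where
  "tree V E \<longleftrightarrow> graph V E \<and> connected_graph V E \<and> \<not> has_cycle V E"

definition subgraph :: "'a set \<Rightarrow> 'a set set \<Rightarrow> 'a set \<Rightarrow> 'a set set \<Rightarrow> bool" where
  "subgraph VQ EQ V E \<longleftrightarrow> VQ \<subseteq> V \<and> EQ \<subseteq> E \<and> graph VQ EQ"

definition subtree :: "'a set \<Rightarrow> 'a set set \<Rightarrow> 'a set \<Rightarrow> 'a set set \<Rightarrow> bool" where
  "subtree VQ EQ V E \<longleftrightarrow> subgraph VQ EQ V E \<and> tree VQ EQ"

definition no_isolated :: "'a set \<Rightarrow> 'a set set \<Rightarrow> bool" where
  "no_isolated VQ EQ \<longleftrightarrow> (\<forall>v\<in>VQ. \<exists>e\<in>EQ. v \<in> e)"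

text \<open>Corona Q o K1: the graph (V',E') is Q with one new pendant vertex f v attached at each v.\<close>
definition is_corona :: "'a set \<Rightarrow> 'a set set \<Rightarrow> 'a set \<Rightarrow> 'a set set \<Rightarrow> bool" where
  "is_corona V' E' VQ EQ \<longleftrightarrow> VQ \<subseteq> V' \<and>
     (\<exists>f. bij_betw f VQ (V' - VQ) \<and> E' = EQ \<union> {{v, f v} | v. v \<in> VQ})"

definition orientation :: "'a set set \<Rightarrow> ('a \<times> 'a) set \<Rightarrow> bool" where
  "orientation Ed A \<longleftrightarrow> (\<forall>(u, v)\<in>A. {u, v} \<in> Ed) \<and>
     (\<forall>e\<in>Ed. \<exists>!a. a \<in> A \<and> {fst a, snd a} = e)"

definition outdeg :: "('a \<times> 'a) set \<Rightarrow> 'a \<Rightarrow> nat" where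
  "outdeg A x = card {y. (x, y) \<in> A}"

definition indeg :: "('a \<times> 'a) set \<Rightarrow> 'a \<Rightarrow> nat" where
  "indeg A x = card {y. (y, x) \<in> A}"

definition dpath :: "('a \<times> 'a) set \<Rightarrow> 'a list \<Rightarrow> bool" where
  "dpath A p \<longleftrightarrow> distinct p \<and> length p \<ge> 2 \<and>
     (\<forall>i < length p - 1. (p ! i, p ! (i + 1)) \<in> A)"

definition path_arcs :: "'a list \<Rightarrow> ('a \<times> 'a) set" where
  "path_arcs p = set (zip p (tl p))"

definition edges_minus :: "'a set set \<Rightarrow> 'a set \<Rightarrow> 'a set set \<Rightarrow> 'a set set" where
  "edges_minus E VQ EQ = {e \<in> E - EQ. e \<inter> VQ \<noteq> {}}"

definition good_subgraph :: "'a set \<Rightarrow> 'a set set \<Rightarrow> 'a set \<Rightarrow> 'a set set \<Rightarrow> bool" where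
  "good_subgraph V E VQ EQ \<longleftrightarrow>
     subgraph VQ EQ V E \<and> no_isolated VQ EQ \<and>
     (\<exists>Ed A P.
        edges_minus E VQ EQ \<subseteq> Ed \<and> Ed \<subseteq> E - EQ \<and> orientation Ed A \<and>
        \<comment> \<open>the arcs of A form the family of oriented paths P x, x in VQ, starting at x\<close>
        (\<forall>x\<in>VQ. dpath A (P x) \<and> hd (P x) = x) \<and>
        (\<forall>x\<in>VQ. \<forall>y\<in>VQ. x \<noteq> y \<longrightarrow> path_arcs (P x) \<inter> path_arcs (P y) = {}) \<and>
        A = (\<Union>x\<in>VQ. path_arcs (P x)) \<and>
        \<comment> \<open>(i)\<close>
        (\<forall>v\<in>VQ. card {x \<in> VQ. hd (P x) = v} = 1 \<and> outdeg A v = 1 \<and>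
            int (indeg A v) = int (deg E v) - int (deg EQ v) - 1) \<and>
        \<comment> \<open>(ii) inner vertices\<close>
        (\<forall>x\<in>VQ. \<forall>i. 0 < i \<and> i < length (P x) - 1 \<longrightarrow>
            outdeg A (P x ! i) = 1 \<and> int (indeg A (P x ! i)) = int (deg E (P x ! i)) - 1) \<and>
        \<comment> \<open>(iii) end vertices\<close>
        (\<forall>x\<in>VQ. indeg A (hd (P x)) < deg E (hd (P x)) \<and>
                 indeg A (last (P x)) < deg E (last (P x))))"

end

theory Submission
  imports Defs
begin

fun walk :: "('a \<Rightarrow> 'a \<Rightarrow> bool) \<Rightarrow> 'a list \<Rightarrow> bool" where
  "walk R [] = True"
| "walk R [x] = True"
| "walk R (x # y # xs) = (R x y \<and> walk R (y # xs))"

lemma walk_nth: "walk R xs \<longleftrightarrow> (\<forall>i < length xs - 1. R (xs ! i) (xs ! Suc i))"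
proof (induction R xs rule: walk.induct)
  case (3 R x y xs)
  show ?case
  proof
    assume h: "walk R (x # y # xs)"
    show "\<forall>i < length (x # y # xs) - 1. R ((x # y # xs) ! i) ((x # y # xs) ! Suc i)"
    proof (intro allI impI)
      fix i assume "i < length (x # y # xs) - 1"
      then show "R ((x # y # xs) ! i) ((x # y # xs) ! Suc i)"
        using h 3 by (cases i) auto
    qed
  next
    assume h: "\<forall>i < length (x # y # xs) - 1. R ((x # y # xs) ! i) ((x # y # xs) ! Suc i)"
    have "R x y" using h[rule_format, of 0] by simp
    moreover have "\<forall>i < length (y # xs) - 1. R ((y # xs) ! i) ((y # xs) ! Suc i)"
    proof (intro allI impI)
      fix i assume "i < length (y # xs) - 1"
      then show "R ((y # xs) ! i) ((y # xs) ! Suc i)" using h[rule_format, of "Suc i"] by simp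
    qed
    ultimately show "walk R (x # y # xs)" using 3 by simp
  qed
qed auto

lemma walk_Cons: "walk R (x # xs) \<Longrightarrow> walk R xs"
  by (cases xs) auto

lemma walk_suffix: "walk R (xs @ ys) \<Longrightarrow> walk R ys"
  by (induction xs) (auto dest: walk_Cons)

lemma walk_join: "walk R (xs @ [y]) \<Longrightarrow> walk R (y # ys) \<Longrightarrow> walk R (xs @ y # ys)"
proof (induction xs)
  case Nil then show ?case by simp
next
  case (Cons x xs)
  then show ?case by (cases xs) auto
qed

lemma walk_prefix: "walk R (xs @ ys) \<Longrightarrow> walk R xs"
proof (induction xs)
  case (Cons x xs)
  then show ?case by (cases xs) auto
qed simp

lemma walk_set: "walk R q \<Longrightarrow> q \<noteq> [] \<Longrightarrow> (\<And>x y. R x y \<Longrightarrow> y \<in> S) \<Longrightarrow> hd q \<in> S \<Longrightarrow> set q \<subseteq> S"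
  by (induction R q rule: walk.induct) auto

lemma simple_path:
  assumes "R\<^sup>*\<^sup>* u v"
  shows "\<exists>q. q \<noteq> [] \<and> hd q = u \<and> last q = v \<and> distinct q \<and> walk R q"
  using assms
proof (induction rule: converse_rtranclp_induct)
  case base
  then show ?case by (intro exI[of _ "[v]"]) auto
next
  case (step u y)
  then obtain q where q: "q \<noteq> []" "hd q = y" "last q = v" "distinct q" "walk R q" by blast
  show ?case
  proof (cases "u \<in> set q")
    case True
    then obtain q1 q2 where "q = q1 @ u # q2" by (meson split_list)
    then show ?thesis using q walk_suffix[of R q1 "u # q2"]
      by (intro exI[of _ "u # q2"]) auto
  next
    case False
    then show ?thesis using q step(1)
      by (intro exI[of _ "u # q"]) (cases q, auto)
  qed
qed

lemma graph_finite: "graph V E \<Longrightarrow> finite E"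
proof -
  assume g: "graph V E"
  have "E \<subseteq> Pow V"
  proof
    fix e assume "e \<in> E"
    then obtain u v where "e = {u, v}" "u \<in> V" "v \<in> V" using g unfolding graph_def by blast
    then show "e \<in> Pow V" by simp
  qed
  moreover have "finite V" using g unfolding graph_def by blast
  ultimately show ?thesis using finite_subset by auto
qed

lemma graph_edge: "graph V E \<Longrightarrow> {a, b} \<in> E \<Longrightarrow> a \<in> V \<and> b \<in> V \<and> a \<noteq> b"
proof -
  assume g: "graph V E" and e: "{a, b} \<in> E"
  then obtain u v where uv: "{a, b} = {u, v}" "u \<noteq> v" "u \<in> V" "v \<in> V"
    unfolding graph_def by blast
  then have "(a = u \<and> b = v) \<or> (a = v \<and> b = u)" by (simp add: doubleton_eq_iff)
  then show ?thesis using uv by blast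
qed

lemma no_cross:
  assumes tr: "tree V E" and st: "subtree VQ EQ V E"
    and p: "distinct (a # m @ [b])" "walk (\<lambda>x y. {x, y} \<in> E) (a # m @ [b])"
    and ab: "a \<in> VQ" "b \<in> VQ"
    and mQ: "set m \<inter> VQ = {}"
    and m0: "m = [] \<Longrightarrow> {a, b} \<notin> EQ"
  shows False
proof -
  have gQ: "graph VQ EQ" and cQ: "connected_graph VQ EQ" and EQE: "EQ \<subseteq> E"
    using st unfolding subtree_def subgraph_def tree_def by auto
  have nc: "\<not> has_cycle V E" and gV: "graph V E" using tr unfolding tree_def by auto
  have "a \<noteq> b" using p(1) by auto
  have "(\<lambda>x y. {x, y} \<in> EQ)\<^sup>*\<^sup>* b a" using cQ ab unfolding connected_graph_def by blast
  then obtain q where q: "q \<noteq> []" "hd q = b" "last q = a" "distinct q" "walk (\<lambda>x y. {x, y} \<in> EQ) q"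
    using simple_path by metis
  have qVQ: "set q \<subseteq> VQ"
    using walk_set[OF q(5) q(1), of VQ] q(2) ab graph_edge[OF gQ] by blast
  have wqE: "walk (\<lambda>x y. {x, y} \<in> E) q"
    using q(5) EQE unfolding walk_nth by blast
  have lq: "length q \<ge> 2"
  proof (rule ccontr)
    assume "\<not> length q \<ge> 2"
    then have "length q = 1" using q(1) by (cases q) (auto simp: not_le)
    then obtain x where "q = [x]" by (metis length_0_conv length_Suc_conv One_nat_def)
    then show False using q \<open>a \<noteq> b\<close> by auto
  qed
  have setV: "set (a # m @ [b]) \<subseteq> V"
    using walk_set[OF p(2), of V] graph_edge[OF gV] ab st unfolding subtree_def subgraph_def by auto
  define c where "c = q @ m"
  have cyc: "has_cycle V E"
  proof (cases "m = []")
    case True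
    have "length q \<noteq> 2"
    proof
      assume "length q = 2"
      then obtain x y where "q = [x, y]" by (metis (no_types, opaque_lifting) One_nat_def Suc_1 length_0_conv length_Suc_conv)
      then show False using q m0[OF True] by (auto simp: insert_commute)
    qed
    then have "length q \<ge> 3" using lq by linarith
    moreover have "{last q, hd q} \<in> E" using p(2) True q by (simp add: insert_commute)
    moreover have "set q \<subseteq> V" using qVQ st unfolding subtree_def subgraph_def by blast
    ultimately show ?thesis unfolding has_cycle_def using q(4) wqE
      unfolding walk_nth by (intro exI[of _ q]) simp
  next
    case False
    obtain q' where q': "q = q' @ [a]" using q(1) q(3) by (metis append_butlast_last_id)
    have "length c \<ge> 3" using lq False unfolding c_def by (cases m) auto
    moreover have "distinct c" using q(4) p(1) mQ qVQ unfolding c_def by auto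
    moreover have "set c \<subseteq> V" using qVQ setV st unfolding c_def subtree_def subgraph_def by auto
    moreover have "walk (\<lambda>x y. {x, y} \<in> E) c"
    proof -
      have "walk (\<lambda>x y. {x, y} \<in> E) (a # m)" using p(2) walk_prefix[of _ "a # m" "[b]"] by simp
      then show ?thesis unfolding c_def q' using walk_join[of _ q' a m] wqE q' by simp
    qed
    moreover have "{last c, hd c} \<in> E"
    proof -
      have "last c = last m" "hd c = b" using False q unfolding c_def by auto
      moreover obtain m' where "m = m' @ [last m]" using False by (metis append_butlast_last_id)
      moreover have "walk (\<lambda>x y. {x, y} \<in> E) ([last m, b])"
        using p(2) walk_suffix[of _ "a # m'" "[last m, b]"] calculation(3) by (metis append_Cons append_assoc append_Cons append_Nil)
      ultimately show ?thesis by simp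
    qed
    ultimately show ?thesis unfolding has_cycle_def walk_nth by (intro exI[of _ c]) simp
  qed
  then show False using nc by blast
qed


lemma no_isolated_Q:
  assumes st: "subtree VQ EQ V E" and ne: "EQ \<noteq> {}"
  shows "no_isolated VQ EQ"
  unfolding no_isolated_def
proof
  fix v assume v: "v \<in> VQ"
  have gQ: "graph VQ EQ" and cQ: "connected_graph VQ EQ"
    using st unfolding subtree_def subgraph_def tree_def by auto
  obtain e where e: "e \<in> EQ" using ne by blast
  then obtain a b where ab: "e = {a, b}" "a \<noteq> b" "a \<in> VQ" "b \<in> VQ" using gQ unfolding graph_def by blast
  obtain w where w: "w \<in> VQ" "w \<noteq> v" using ab by blast
  have "(\<lambda>x y. {x, y} \<in> EQ)\<^sup>*\<^sup>* v w" using cQ v w unfolding connected_graph_def by blast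
  then obtain y where "{v, y} \<in> EQ" using w(2)
    by (cases rule: converse_rtranclpE) auto
  then show "\<exists>e\<in>EQ. v \<in> e" by blast
qed

lemma card_ge1: "finite E \<Longrightarrow> e \<in> E \<Longrightarrow> x \<in> e \<Longrightarrow> deg E x \<ge> 1"
proof -
  assume h: "finite E" "e \<in> E" "x \<in> e"
  have "finite {e \<in> E. x \<in> e}" using h(1) by simp
  moreover have "{e \<in> E. x \<in> e} \<noteq> {}" using h by blast
  ultimately show ?thesis unfolding deg_def by (simp add: Suc_leI card_gt_0_iff)
qed

lemma good_if:
  assumes tr: "tree V E" and st: "subtree VQ EQ V E" and ne: "EQ \<noteq> {}"
    and nl: "closed_nbhd E VQ \<inter> leaves V E = {}"
    and cor: "is_corona (closed_nbhd E VQ) (induced_edges E (closed_nbhd E VQ)) VQ EQ"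
  shows "good_subgraph V E VQ EQ"
proof -
  define N where "N = closed_nbhd E VQ"
  obtain f where bij: "bij_betw f VQ (N - VQ)"
    and IE: "induced_edges E N = EQ \<union> {{v, f v} | v. v \<in> VQ}"
    using cor unfolding is_corona_def N_def by blast
  have gQ: "graph VQ EQ" and EQE: "EQ \<subseteq> E" and VQV: "VQ \<subseteq> V"
    using st unfolding subtree_def subgraph_def tree_def by auto
  have gV: "graph V E" using tr unfolding tree_def by auto
  have finE: "finite E" using graph_finite[OF gV] .
  have finEQ: "finite EQ" using graph_finite[OF gQ] .
  have fnot: "\<And>v. v \<in> VQ \<Longrightarrow> f v \<notin> VQ \<and> f v \<in> N" using bij unfolding bij_betw_def by blast
  have finj: "\<And>v w. v \<in> VQ \<Longrightarrow> w \<in> VQ \<Longrightarrow> f v = f w \<Longrightarrow> v = w"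
    using bij unfolding bij_betw_def inj_on_def by blast
  have edgeE: "\<And>v. v \<in> VQ \<Longrightarrow> {v, f v} \<in> E"
  proof -
    fix v assume "v \<in> VQ"
    then have "{v, f v} \<in> induced_edges E N" using IE by blast
    then show "{v, f v} \<in> E" unfolding induced_edges_def by blast
  qed
  have EQsub: "\<And>e. e \<in> EQ \<Longrightarrow> e \<subseteq> VQ"
  proof -
    fix e assume "e \<in> EQ"
    then obtain u v where "e = {u, v}" "u \<in> VQ" "v \<in> VQ" using gQ unfolding graph_def by blast
    then show "e \<subseteq> VQ" by simp
  qed
  have pnEQ: "\<And>v. v \<in> VQ \<Longrightarrow> {v, f v} \<notin> EQ" using EQsub fnot by blast
  have em: "\<And>e x. e \<in> E \<Longrightarrow> e \<notin> EQ \<Longrightarrow> x \<in> VQ \<Longrightarrow> x \<in> e \<Longrightarrow> e = {x, f x}"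
  proof -
    fix e x assume h: "e \<in> E" "e \<notin> EQ" "x \<in> VQ" "x \<in> e"
    obtain u w where uw: "e = {u, w}" using h gV unfolding graph_def by blast
    obtain y where y: "e = {x, y}"
    proof (cases "x = u")
      case True then show ?thesis using that uw by blast
    next
      case False then have "x = w" using uw h(4) by blast
      then show ?thesis using that[of u] uw by (simp add: insert_commute)
    qed
    have "y \<in> N" using h y unfolding N_def closed_nbhd_def by blast
    then have "e \<subseteq> N" using y h unfolding N_def closed_nbhd_def by blast
    then have "e \<in> induced_edges E N" using h unfolding induced_edges_def by blast
    then obtain v where v: "v \<in> VQ" "e = {v, f v}" using IE h by blast
    then have "x = v" using h fnot by blast
    then show "e = {x, f x}" using v by simp
  qed
  define A where "A = (\<lambda>v. (v, f v)) ` VQ"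
  define Ed where "Ed = (\<lambda>v. {v, f v}) ` VQ"
  define P where "P = (\<lambda>v. [v, f v])"
  have pa: "\<And>v. path_arcs (P v) = {(v, f v)}" unfolding P_def path_arcs_def by simp
  have deg_v: "\<And>v. v \<in> VQ \<Longrightarrow> deg E v = deg EQ v + 1"
  proof -
    fix v assume v: "v \<in> VQ"
    have "{e \<in> E. v \<in> e} = insert {v, f v} {e \<in> EQ. v \<in> e}"
      using em[OF _ _ v] edgeE[OF v] EQE by auto
    moreover have "finite {e \<in> EQ. v \<in> e}" using finEQ by simp
    ultimately show "deg E v = deg EQ v + 1" unfolding deg_def using pnEQ[OF v] by simp
  qed
  have outA: "\<And>v. v \<in> VQ \<Longrightarrow> {y. (v, y) \<in> A} = {f v}" unfolding A_def by auto
  have inA: "\<And>v. v \<in> VQ \<Longrightarrow> {y. (y, v) \<in> A} = {}" unfolding A_def using fnot by auto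
  have inAf: "\<And>v. v \<in> VQ \<Longrightarrow> {y. (y, f v) \<in> A} = {v}" unfolding A_def using finj by auto
  have degf: "\<And>v. v \<in> VQ \<Longrightarrow> deg E (f v) \<ge> 2"
  proof -
    fix v assume v: "v \<in> VQ"
    have "deg E (f v) \<ge> 1" using card_ge1[OF finE edgeE[OF v]] by simp
    moreover have "f v \<in> V" using graph_edge[OF gV edgeE[OF v]] by simp
    then have "deg E (f v) \<noteq> 1" using nl fnot[OF v] unfolding N_def leaves_def by blast
    ultimately show "deg E (f v) \<ge> 2" by linarith
  qed
  have degv: "\<And>v. v \<in> VQ \<Longrightarrow> deg E v \<ge> 1" using card_ge1[OF finE edgeE] by simp
  show ?thesis
    unfolding good_subgraph_def
  proof (intro conjI exI)
    show "subgraph VQ EQ V E" using st unfolding subtree_def by blast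
    show "no_isolated VQ EQ" using no_isolated_Q[OF st ne] .
    show "edges_minus E VQ EQ \<subseteq> Ed"
      unfolding edges_minus_def Ed_def using em by blast
    show "Ed \<subseteq> E - EQ" unfolding Ed_def using edgeE pnEQ by blast
    show "orientation Ed A"
      unfolding orientation_def
    proof (intro conjI)
      show "\<forall>(u, v)\<in>A. {u, v} \<in> Ed" unfolding A_def Ed_def by blast
    next
      show "\<forall>e\<in>Ed. \<exists>!a. a \<in> A \<and> {fst a, snd a} = e"
      proof
      fix e assume "e \<in> Ed"
      then obtain v where v: "v \<in> VQ" "e = {v, f v}" unfolding Ed_def by blast
      show "\<exists>!a. a \<in> A \<and> {fst a, snd a} = e"
      proof (rule ex1I[of _ "(v, f v)"])
        show "(v, f v) \<in> A \<and> {fst (v, f v), snd (v, f v)} = e" using v unfolding A_def by auto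
      next
        fix a assume "a \<in> A \<and> {fst a, snd a} = e"
        then obtain w where w: "w \<in> VQ" "a = (w, f w)" "{w, f w} = {v, f v}" using v unfolding A_def by auto
        then have "w = v" using fnot v by (metis doubleton_eq_iff)
        then show "a = (v, f v)" using w by simp
      qed
      qed
    qed
    show "\<forall>x\<in>VQ. dpath A (P x) \<and> hd (P x) = x"
    proof
      fix x assume x: "x \<in> VQ"
      have "x \<noteq> f x" using fnot[OF x] x by auto
      then show "dpath A (P x) \<and> hd (P x) = x"
        unfolding dpath_def P_def A_def using x by (auto simp: less_Suc_eq)
    qed
    show "\<forall>x\<in>VQ. \<forall>y\<in>VQ. x \<noteq> y \<longrightarrow> path_arcs (P x) \<inter> path_arcs (P y) = {}"
      using pa by auto
    show "A = (\<Union>x\<in>VQ. path_arcs (P x))" using pa unfolding A_def by auto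
    show "\<forall>v\<in>VQ. card {x \<in> VQ. hd (P x) = v} = 1 \<and> outdeg A v = 1 \<and>
            int (indeg A v) = int (deg E v) - int (deg EQ v) - 1"
    proof
      fix v assume v: "v \<in> VQ"
      have "{x \<in> VQ. hd (P x) = v} = {v}" using v unfolding P_def by auto
      then show "card {x \<in> VQ. hd (P x) = v} = 1 \<and> outdeg A v = 1 \<and>
            int (indeg A v) = int (deg E v) - int (deg EQ v) - 1"
        unfolding outdeg_def indeg_def using outA[OF v] inA[OF v] deg_v[OF v] by simp
    qed
    show "\<forall>x\<in>VQ. \<forall>i. 0 < i \<and> i < length (P x) - 1 \<longrightarrow>
            outdeg A (P x ! i) = 1 \<and> int (indeg A (P x ! i)) = int (deg E (P x ! i)) - 1"
      unfolding P_def by simp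
    show "\<forall>x\<in>VQ. indeg A (hd (P x)) < deg E (hd (P x)) \<and>
                 indeg A (last (P x)) < deg E (last (P x))"
    proof
      fix x assume x: "x \<in> VQ"
      show "indeg A (hd (P x)) < deg E (hd (P x)) \<and> indeg A (last (P x)) < deg E (last (P x))"
        unfolding P_def indeg_def using inA[OF x] inAf[OF x] degf[OF x] degv[OF x] by simp
    qed
  qed
qed


lemma decomp_path:
  assumes "length p \<ge> 2"
  shows "p = hd p # butlast (tl p) @ [last p]"
proof -
  obtain x r where p: "p = x # r" using assms by (cases p) auto
  then have "r \<noteq> []" using assms by auto
  then have "r = butlast r @ [last r]" by simp
  then show ?thesis using p \<open>r \<noteq> []\<close> by simp
qed

lemma decomp_inner:
  assumes "length p \<ge> 2" "y \<in> set (butlast (tl p))"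
  shows "\<exists>i. 0 < i \<and> i < length p - 1 \<and> p ! i = y"
proof -
  obtain j where j: "j < length (butlast (tl p))" "butlast (tl p) ! j = y"
    using assms(2) by (metis in_set_conv_nth)
  have "p ! Suc j = y" using j assms(1) by (cases p) (auto simp: nth_butlast)
  moreover have "Suc j < length p - 1" using j by simp
  ultimately show ?thesis by (intro exI[of _ "Suc j"]) simp
qed

lemma arc_index:
  assumes "(w, v) \<in> path_arcs p"
  shows "\<exists>i. i < length p - 1 \<and> p ! i = w \<and> p ! Suc i = v"
proof -
  obtain n where n: "p ! n = w" "tl p ! n = v" "n < length p" "n < length (tl p)"
    using assms unfolding path_arcs_def by (metis in_set_zip fst_conv snd_conv)
  then have "p ! Suc n = v" by (cases p) auto
  then show ?thesis using n by (intro exI[of _ n]) auto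
qed


lemma good_only:
  assumes tr: "tree V E" and st: "subtree VQ EQ V E" and ne: "EQ \<noteq> {}"
    and good: "good_subgraph V E VQ EQ"
  shows "closed_nbhd E VQ \<inter> leaves V E = {} \<and>
         is_corona (closed_nbhd E VQ) (induced_edges E (closed_nbhd E VQ)) VQ EQ"
proof -
  define N where "N = closed_nbhd E VQ"
  have gQ: "graph VQ EQ" and EQE: "EQ \<subseteq> E" and VQV: "VQ \<subseteq> V"
    using st unfolding subtree_def subgraph_def tree_def by auto
  have gV: "graph V E" using tr unfolding tree_def by auto
  have finE: "finite E" using graph_finite[OF gV] .
  have finEQ: "finite EQ" using graph_finite[OF gQ] .
  have finV: "finite V" using gV unfolding graph_def by blast
  have EQsub: "\<And>e. e \<in> EQ \<Longrightarrow> e \<subseteq> VQ"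
  proof -
    fix e assume "e \<in> EQ"
    then obtain u v where "e = {u, v}" "u \<in> VQ" "v \<in> VQ" using gQ unfolding graph_def by blast
    then show "e \<subseteq> VQ" by simp
  qed
  have noiso: "no_isolated VQ EQ" using no_isolated_Q[OF st ne] .
  obtain Ed A P where
    Emin: "edges_minus E VQ EQ \<subseteq> Ed" and EdE: "Ed \<subseteq> E - EQ" and ori: "orientation Ed A"
    and dp: "\<forall>x\<in>VQ. dpath A (P x) \<and> hd (P x) = x"
    and Aun: "A = (\<Union>x\<in>VQ. path_arcs (P x))"
    and ci: "\<forall>v\<in>VQ. card {x \<in> VQ. hd (P x) = v} = 1 \<and> outdeg A v = 1 \<and>
            int (indeg A v) = int (deg E v) - int (deg EQ v) - 1"
    and cii: "\<forall>x\<in>VQ. \<forall>i. 0 < i \<and> i < length (P x) - 1 \<longrightarrow>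
            outdeg A (P x ! i) = 1 \<and> int (indeg A (P x ! i)) = int (deg E (P x ! i)) - 1"
    and ciii: "\<forall>x\<in>VQ. indeg A (hd (P x)) < deg E (hd (P x)) \<and>
                 indeg A (last (P x)) < deg E (last (P x))"
    using good unfolding good_subgraph_def by blast
  have arcE: "\<And>a b. (a, b) \<in> A \<Longrightarrow> {a, b} \<in> E \<and> {a, b} \<notin> EQ"
  proof -
    fix a b assume "(a, b) \<in> A"
    then have "{a, b} \<in> Ed" using ori unfolding orientation_def by blast
    then show "{a, b} \<in> E \<and> {a, b} \<notin> EQ" using EdE by blast
  qed
  have finin: "\<And>v. finite {y. (y, v) \<in> A}"
  proof -
    fix v
    have "{y. (y, v) \<in> A} \<subseteq> V" using arcE graph_edge[OF gV] by blast
    then show "finite {y. (y, v) \<in> A}" using finV finite_subset by blast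
  qed
  have degQ1: "\<And>v. v \<in> VQ \<Longrightarrow> deg EQ v \<ge> 1"
  proof -
    fix v assume "v \<in> VQ"
    then obtain e where "e \<in> EQ" "v \<in> e" using noiso unfolding no_isolated_def by blast
    then show "deg EQ v \<ge> 1" using card_ge1[OF finEQ] by blast
  qed
  have inner_notQ: "\<And>x i. x \<in> VQ \<Longrightarrow> 0 < i \<Longrightarrow> i < length (P x) - 1 \<Longrightarrow> P x ! i \<notin> VQ"
  proof
    fix x i assume h: "x \<in> VQ" "0 < i" "i < length (P x) - 1" "P x ! i \<in> VQ"
    have "int (indeg A (P x ! i)) = int (deg E (P x ! i)) - 1" using cii h by blast
    moreover have "int (indeg A (P x ! i)) = int (deg E (P x ! i)) - int (deg EQ (P x ! i)) - 1"
      using ci h(4) by blast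
    ultimately show False using degQ1[OF h(4)] by linarith
  qed
  have walkP: "\<And>x. x \<in> VQ \<Longrightarrow> walk (\<lambda>a b. {a, b} \<in> E) (P x)"
    using dp arcE unfolding dpath_def walk_nth by fastforce
  have lenP: "\<And>x. x \<in> VQ \<Longrightarrow> length (P x) \<ge> 2" and distP: "\<And>x. x \<in> VQ \<Longrightarrow> distinct (P x)"
    using dp unfolding dpath_def by auto
  have hdP: "\<And>x. x \<in> VQ \<Longrightarrow> hd (P x) = x" using dp by blast
  have P0: "\<And>x. x \<in> VQ \<Longrightarrow> P x ! 0 = x" using hdP lenP by (metis hd_conv_nth list.size(3) not_numeral_le_zero)
  have noin: "\<And>v w. v \<in> VQ \<Longrightarrow> (w, v) \<notin> A"
  proof
    fix v w assume v: "v \<in> VQ" and wv: "(w, v) \<in> A"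
    then obtain x where x: "x \<in> VQ" "(w, v) \<in> path_arcs (P x)" using Aun by blast
    then obtain i where i: "i < length (P x) - 1" "P x ! i = w" "P x ! Suc i = v"
      using arc_index by metis
    have "\<not> Suc i < length (P x) - 1" using inner_notQ[OF x(1), of "Suc i"] i v by auto
    then have "Suc i = length (P x) - 1" using i by linarith
    then have lastv: "last (P x) = v" using i(3) lenP[OF x(1)] by (cases "P x = []") (auto simp: last_conv_nth)
    define m where "m = butlast (tl (P x))"
    have pe: "P x = x # m @ [v]" using decomp_path[OF lenP[OF x(1)]] hdP[OF x(1)] lastv unfolding m_def by simp
    show False
    proof (rule no_cross[OF tr st, of x m v])
      show "distinct (x # m @ [v])" using distP[OF x(1)] pe by simp
      show "walk (\<lambda>x y. {x, y} \<in> E) (x # m @ [v])" using walkP[OF x(1)] pe by simp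
      show "x \<in> VQ" "v \<in> VQ" using x v by auto
      show "set m \<inter> VQ = {}"
      proof (rule ccontr)
        assume "set m \<inter> VQ \<noteq> {}"
        then obtain y where y: "y \<in> set m" "y \<in> VQ" by blast
        then obtain j where "0 < j" "j < length (P x) - 1" "P x ! j = y"
          using decomp_inner[OF lenP[OF x(1)]] unfolding m_def by blast
        then show False using inner_notQ[OF x(1)] y by blast
      qed
      show "m = [] \<Longrightarrow> {x, v} \<notin> EQ"
      proof -
        assume "m = []"
        then have "P x = [x, v]" using pe by simp
        then have "(x, v) \<in> A" using dp x(1) unfolding dpath_def by force
        then show "{x, v} \<notin> EQ" using arcE by blast
      qed
    qed
  qed
  have degv: "\<And>v. v \<in> VQ \<Longrightarrow> deg E v = deg EQ v + 1"
  proof -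
    fix v assume v: "v \<in> VQ"
    have "{y. (y, v) \<in> A} = {}" using noin[OF v] by blast
    then have "indeg A v = 0" unfolding indeg_def by simp
    then show "deg E v = deg EQ v + 1" using ci v by fastforce
  qed
  define f where "f = (\<lambda>v. P v ! 1)"
  have arcf: "\<And>v. v \<in> VQ \<Longrightarrow> (v, f v) \<in> A"
  proof -
    fix v assume v: "v \<in> VQ"
    have "(P v ! 0, P v ! Suc 0) \<in> A" using dp v lenP[OF v] unfolding dpath_def by force
    then show "(v, f v) \<in> A" using P0[OF v] unfolding f_def by simp
  qed
  have edgef: "\<And>v. v \<in> VQ \<Longrightarrow> {v, f v} \<in> E \<and> {v, f v} \<notin> EQ" using arcf arcE by blast
  have uniq: "\<And>v u. v \<in> VQ \<Longrightarrow> {v, u} \<in> E \<Longrightarrow> {v, u} \<notin> EQ \<Longrightarrow> u = f v"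
  proof -
    fix v u assume v: "v \<in> VQ" and u: "{v, u} \<in> E" "{v, u} \<notin> EQ"
    define S where "S = {e \<in> E. v \<in> e \<and> e \<notin> EQ}"
    have un: "{e \<in> E. v \<in> e} = {e \<in> EQ. v \<in> e} \<union> S" using EQE unfolding S_def by blast
    have "card {e \<in> E. v \<in> e} = card {e \<in> EQ. v \<in> e} + card S"
      unfolding un by (rule card_Un_disjoint) (use finE finEQ in \<open>auto simp: S_def\<close>)
    then have "card S = 1" using degv[OF v] unfolding deg_def by simp
    then obtain e0 where "S = {e0}" by (rule card_1_singletonE)
    moreover have "{v, u} \<in> S" "{v, f v} \<in> S" using u edgef[OF v] unfolding S_def by auto
    ultimately have eq: "{v, u} = {v, f v}" by blast
    have "v \<noteq> f v" using graph_edge[OF gV] edgef[OF v] by blast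
    then show "u = f v" using eq by (metis doubleton_eq_iff)
  qed
  have fnot: "\<And>v. v \<in> VQ \<Longrightarrow> f v \<notin> VQ"
  proof
    fix v assume v: "v \<in> VQ" and fv: "f v \<in> VQ"
    show False
    proof (rule no_cross[OF tr st, of v "[]" "f v"])
      show "distinct (v # [] @ [f v])" using graph_edge[OF gV] edgef[OF v] by auto
      show "walk (\<lambda>x y. {x, y} \<in> E) (v # [] @ [f v])" using edgef[OF v] by simp
    qed (use v fv edgef[OF v] in auto)
  qed
  have finj: "\<And>v w. v \<in> VQ \<Longrightarrow> w \<in> VQ \<Longrightarrow> f v = f w \<Longrightarrow> v = w"
  proof (rule ccontr)
    fix v w assume v: "v \<in> VQ" and w: "w \<in> VQ" and eq: "f v = f w" and ne: "v \<noteq> w"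
    show False
    proof (rule no_cross[OF tr st, of v "[f v]" w])
      show "distinct (v # [f v] @ [w])" using fnot[OF v] fnot[OF w] v w ne eq by auto
      have "{f v, w} \<in> E" using edgef[OF w] eq by (simp add: insert_commute)
      then show "walk (\<lambda>x y. {x, y} \<in> E) (v # [f v] @ [w])" using edgef[OF v] by simp
    qed (use v w fnot in auto)
  qed
  have degf: "\<And>v. v \<in> VQ \<Longrightarrow> deg E (f v) \<ge> 2"
  proof -
    fix v assume v: "v \<in> VQ"
    have "v \<in> {y. (y, f v) \<in> A}" using arcf[OF v] by simp
    then have in1: "indeg A (f v) \<ge> 1" unfolding indeg_def using finin
      by (metis One_nat_def Suc_leI card_gt_0_iff empty_iff)
    show "deg E (f v) \<ge> 2"
    proof (cases "1 < length (P v) - 1")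
      case True
      then have "int (indeg A (f v)) = int (deg E (f v)) - 1" using cii v unfolding f_def by auto
      then show ?thesis using in1 by linarith
    next
      case False
      then have "length (P v) = 2" using lenP[OF v] by linarith
      then have "last (P v) = f v" unfolding f_def by (cases "P v = []") (auto simp: last_conv_nth)
      then have "indeg A (f v) < deg E (f v)" using ciii v by metis
      then show ?thesis using in1 by linarith
    qed
  qed
  have Neq: "N = VQ \<union> f ` VQ"
  proof
    show "N \<subseteq> VQ \<union> f ` VQ"
    proof
      fix x assume "x \<in> N"
      then have "x \<in> VQ \<or> (\<exists>v\<in>VQ. {v, x} \<in> E)" unfolding N_def closed_nbhd_def by blast
      then show "x \<in> VQ \<union> f ` VQ"
      proof
        assume "\<exists>v\<in>VQ. {v, x} \<in> E"
        then obtain v where v: "v \<in> VQ" "{v, x} \<in> E" by blast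
        show ?thesis
        proof (cases "x \<in> VQ")
          case False
          then have "{v, x} \<notin> EQ" using EQsub by blast
          then have "x = f v" using uniq v by blast
          then show ?thesis using v by blast
        qed simp
      qed simp
    qed
    show "VQ \<union> f ` VQ \<subseteq> N" using edgef unfolding N_def closed_nbhd_def by blast
  qed
  have leaves: "N \<inter> leaves V E = {}"
  proof -
    have "\<And>x. x \<in> N \<Longrightarrow> deg E x \<noteq> 1"
    proof -
      fix x assume "x \<in> N"
      then consider "x \<in> VQ" | v where "v \<in> VQ" "x = f v" using Neq by blast
      then show "deg E x \<noteq> 1"
      proof cases
        case 1 then show ?thesis using degv degQ1 by fastforce
      next
        case 2 then show ?thesis using degf by fastforce
      qed
    qed
    then show ?thesis unfolding leaves_def by blast
  qed
  have bij: "bij_betw f VQ (N - VQ)"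
    unfolding bij_betw_def inj_on_def using finj Neq fnot by blast
  have IE: "induced_edges E N = EQ \<union> {{v, f v} | v. v \<in> VQ}"
  proof
    show "EQ \<union> {{v, f v} | v. v \<in> VQ} \<subseteq> induced_edges E N"
      unfolding induced_edges_def using EQE EQsub edgef Neq by blast
  next
    show "induced_edges E N \<subseteq> EQ \<union> {{v, f v} | v. v \<in> VQ}"
    proof
      fix e assume "e \<in> induced_edges E N"
      then have e: "e \<in> E" "e \<subseteq> N" unfolding induced_edges_def by auto
      then obtain a b where ab: "e = {a, b}" using gV unfolding graph_def by blast
      then have abne: "a \<noteq> b" using graph_edge[OF gV] e by blast
      have aN: "a \<in> VQ \<union> f ` VQ" and bN: "b \<in> VQ \<union> f ` VQ" using e ab Neq by auto
      show "e \<in> EQ \<union> {{v, f v} | v. v \<in> VQ}"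
      proof (cases "a \<in> VQ")
        case aQ: True
        show ?thesis
        proof (cases "b \<in> VQ")
          case bQ: True
          show ?thesis
          proof (rule ccontr)
            assume "e \<notin> EQ \<union> {{v, f v} | v. v \<in> VQ}"
            then have "{a, b} \<notin> EQ" using ab by blast
            show False
            proof (rule no_cross[OF tr st, of a "[]" b])
              show "distinct (a # [] @ [b])" using abne by simp
              show "walk (\<lambda>x y. {x, y} \<in> E) (a # [] @ [b])" using e ab by simp
            qed (use aQ bQ \<open>{a, b} \<notin> EQ\<close> in auto)
          qed
        next
          case bQ: False
          then have "{a, b} \<notin> EQ" using EQsub by blast
          then have "b = f a" using uniq aQ e ab by blast
          then show ?thesis using ab aQ by blast
        qed
      next
        case aQ: False
        show ?thesis
        proof (cases "b \<in> VQ")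
          case bQ: True
          then have "{b, a} \<notin> EQ" using EQsub aQ by blast
          moreover have "{b, a} \<in> E" using e ab by (simp add: insert_commute)
          ultimately have "a = f b" using uniq bQ by blast
          then show ?thesis using ab bQ by (auto simp: insert_commute)
        next
          case bQ: False
          obtain v where v: "v \<in> VQ" "a = f v" using aN aQ by blast
          obtain w where w: "w \<in> VQ" "b = f w" using bN bQ by blast
          have "v \<noteq> w" using abne v w by blast
          have False
          proof (rule no_cross[OF tr st, of v "[f v, f w]" w])
            show "distinct (v # [f v, f w] @ [w])" using fnot[OF v(1)] fnot[OF w(1)] v w \<open>v \<noteq> w\<close> abne by auto
            have "{f w, w} \<in> E" using edgef[OF w(1)] by (simp add: insert_commute)
            then show "walk (\<lambda>x y. {x, y} \<in> E) (v # [f v, f w] @ [w])"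
              using edgef[OF v(1)] e ab v w by simp
          qed (use v w fnot in auto)
          then show ?thesis by blast
        qed
      qed
    qed
  qed
  have "VQ \<subseteq> N" using Neq by blast
  then show ?thesis using leaves bij IE unfolding N_def is_corona_def by blast
qed

theorem proposition7p3:
  fixes V :: "'a set" and E :: "'a set set" and VQ :: "'a set" and EQ :: "'a set set"
  assumes "tree V E"
    and "subtree VQ EQ V E"
    and "EQ \<noteq> {}"
  shows "good_subgraph V E VQ EQ \<longleftrightarrow>
           closed_nbhd E VQ \<inter> leaves V E = {} \<and>
           is_corona (closed_nbhd E VQ) (induced_edges E (closed_nbhd E VQ)) VQ EQ"
  using good_if[OF assms] good_only[OF assms] by blast

end
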